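(* Let $w:\mathbb{R}^n\to\mathbb{R}$ be continuous and bounded from below, and suppose that for some $c>0$ it satisfies $Lw\ge -cw$ in the viscosity sense in $\{w<0\}$. Then $w\ge0$ in $\mathbb{R}^n$.
   Context: Let $n\ge2$, $s\in(0,1)$. $Lu(x)=\int_{\mathbb{R}^n}(u(x)-u(x+y))\frac{\mu(y/|y|)}{|y|^{n+s}}dy$ with $\mu:S^{n-1}\to\mathbb{R}$ measurable, $\mu(z)=\mu(-z)$ and $0<\lambda\le\mu\le\Lambda<\infty$. *)

theory Defs
  imports "HOL-Analysis.Analysis"
begin

definition kernel :: "(real^'n \<Rightarrow> real) \<Rightarrow> real \<Rightarrow> real^'n \<Rightarrow> real" where
  "kernel \<mu> s y = \<mu> (y /\<^sub>R norm y) / (norm y powr (real CARD('n) + s))"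

text \<open>The nonlocal operator
  L v (x) = PV int (v x - v (x+y)) mu(y/|y|)/|y|^(n+s) dy,
  written (using the evenness of mu) in the usual symmetrised form
  1/2 int (2 v x - v (x+y) - v (x-y)) K(y) dy, with values in the extended reals
  (positive part minus negative part of the integral).\<close>
definition Lop :: "(real^'n \<Rightarrow> real) \<Rightarrow> real \<Rightarrow> (real^'n \<Rightarrow> real) \<Rightarrow> real^'n \<Rightarrow> ereal" where
  "Lop \<mu> s v x =
     (let g = (\<lambda>y. (2 * v x - v (x + y) - v (x - y)) / 2 * kernel \<mu> s y)
      in enn2ereal (\<integral>\<^sup>+ y. ennreal (g y) \<partial>lborel)
         - enn2ereal (\<integral>\<^sup>+ y. ennreal (- g y) \<partial>lborel))"

definition C2_on :: "((real,'n::finite) vec \<Rightarrow> real) \<Rightarrow> ((real,'n::finite) vec) set \<Rightarrow> bool" where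
  "C2_on f S \<longleftrightarrow>
     (\<exists>(f' :: (real,'n::finite) vec \<Rightarrow> (((real,'n::finite) vec) \<Rightarrow>\<^sub>L real))
        (f'' :: (real,'n::finite) vec \<Rightarrow> ((real,'n::finite) vec \<Rightarrow>\<^sub>L (((real,'n::finite) vec) \<Rightarrow>\<^sub>L real))).
        (\<forall>x\<in>S. (f has_derivative blinfun_apply (f' x)) (at x)) \<and>
        (\<forall>x\<in>S. (f' has_derivative blinfun_apply (f'' x)) (at x)) \<and>
        continuous_on S f'')"

definition visc_super :: "(real^'n \<Rightarrow> real) \<Rightarrow> real \<Rightarrow> (real^'n \<Rightarrow> real)
    \<Rightarrow> (real^'n \<Rightarrow> real) \<Rightarrow> (real^'n) set \<Rightarrow> bool" where
  "visc_super \<mu> s w f \<Omega> \<longleftrightarrow>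
     (\<forall>x0\<in>\<Omega>. \<forall>N \<phi>. open N \<and> x0 \<in> N \<and> N \<subseteq> \<Omega> \<and> C2_on \<phi> N \<and>
        \<phi> x0 = w x0 \<and> (\<forall>x\<in>N - {x0}. \<phi> x < w x) \<longrightarrow>
        Lop \<mu> s (\<lambda>x. if x \<in> N then \<phi> x else w x) x0 \<ge> ereal (f x0))"

end

theory Submission
  imports Defs
begin

lemma ennreal_le_suminf1: "(f k :: ennreal) \<le> (\<Sum>i. f i)"
proof -
  have "sum f {k} \<le> suminf f"
    by (rule sum_le_suminf) auto
  then show ?thesis by simp
qed

lemma geom_sum_fin:
  fixes C q :: real assumes "0 \<le> C" "0 \<le> q" "q < 1"
  shows "(\<Sum>k. ennreal (C * q ^ k)) < \<infinity>"
proof -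
  have "summable (\<lambda>k. C * q ^ k)"
    using assms by (intro summable_mult summable_geometric) auto
  then have "(\<Sum>k. ennreal (C * q ^ k)) \<noteq> top"
    using assms by (intro ennreal_suminf_neq_top) auto
  then show ?thesis by (simp add: top.not_eq_extremum)
qed

lemma pointwise_bound:
  fixes y :: "'a::euclidean_space" and d s :: real
  assumes s: "0 < s" "s < 1" and d: "d \<ge> 2"
  shows "ennreal (min ((norm y)^2) 1 * norm y powr (-(d + s)))
     \<le> (\<Sum>k. ennreal (2 powr (-(real k * (d+s)))) * indicator (ball 0 (2 powr (real k + 1))) y)
      + (\<Sum>k. ennreal (2 powr ((real k + 1) * (d+s-2))) * indicator (ball 0 (2 powr (1 - real k))) y)"
  (is "_ \<le> ?A + ?B")
proof (cases "y = 0")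
  case True then show ?thesis by simp
next
  case False
  define r where "r = norm y"
  have r: "r > 0" using False by (simp add: r_def)
  show ?thesis
  proof (cases "r \<ge> 1")
    case True
    define j where "j = \<lfloor>log 2 r\<rfloor>"
    have j0: "j \<ge> 0" using True unfolding j_def by simp
    define k where "k = nat j"
    have kj: "real k = of_int j" using j0 by (simp add: k_def)
    have jb: "2 powr j \<le> r \<and> r < 2 powr (j + 1)"
      using floor_log_eq_powr_iff[of r 2 j] r j_def by simp
    have "min ((norm y)^2) 1 * norm y powr (-(d + s)) = r powr (-(d+s))"
      using True by (simp add: r_def[symmetric] min_def) (smt (verit) one_le_power)
    also have "\<dots> \<le> (2 powr real k) powr (-(d+s))"
      using jb kj s d by (intro powr_mono2') auto
    also have "\<dots> = 2 powr (-(real k * (d+s)))" by (simp add: powr_powr algebra_simps)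
    finally have le: "min ((norm y)^2) 1 * norm y powr (-(d + s)) \<le> 2 powr (-(real k * (d+s)))" .
    have ind: "indicator (ball 0 (2 powr (real k + 1))) y = (1::ennreal)"
      using jb kj by (simp add: r_def)
    have "ennreal (min ((norm y)^2) 1 * norm y powr (-(d + s)))
        \<le> ennreal (2 powr (-(real k * (d+s)))) * indicator (ball 0 (2 powr (real k + 1))) y"
      using le ind by (simp add: ennreal_leI)
    also have "\<dots> \<le> ?A" by (rule ennreal_le_suminf1)
    also have "\<dots> \<le> ?A + ?B" by simp
    finally show ?thesis .
  next
    case False
    define j where "j = \<lfloor>log 2 r\<rfloor>"
    have "log 2 r < 0" using False r by simp
    then have j0: "j \<le> -1" unfolding j_def by linarith
    define k where "k = nat (-j-1)"
    have kj: "real k = - of_int j - 1" using j0 by (simp add: k_def)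
    have jb: "2 powr j \<le> r \<and> r < 2 powr (j + 1)"
      using floor_log_eq_powr_iff[of r 2 j] r j_def by simp
    have "min ((norm y)^2) 1 * norm y powr (-(d + s)) = r powr 2 * r powr (-(d+s))"
      using False r by (simp add: r_def[symmetric] min_def powr_realpow) (smt (verit) power_le_one)
    also have "\<dots> = r powr (2 + -(d+s))" by (rule powr_add[symmetric])
    also have "\<dots> = r powr (2 - d - s)" proof -
      have "2 + -(d+s) = 2-d-(s::real)" by simp
      then show ?thesis by (simp only:)
    qed
    also have "\<dots> \<le> (2 powr j) powr (2 - d - s)"
      using jb s d by (intro powr_mono2') auto
    also have "\<dots> = 2 powr ((real k + 1) * (d+s-2))" using kj by (simp add: powr_powr algebra_simps)
    finally have le: "min ((norm y)^2) 1 * norm y powr (-(d + s)) \<le> 2 powr ((real k + 1) * (d+s-2))" .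
    have "r < 2 powr (1 - real k)"
    proof -
      have "real_of_int (j+1) = - real k" using kj by simp
      then have "r < 2 powr (- real k)" using jb by metis
      also have "\<dots> \<le> 2 powr (1 - real k)" by (intro powr_mono) auto
      finally show ?thesis .
    qed
    then have ind: "indicator (ball 0 (2 powr (1 - real k))) y = (1::ennreal)"
      by (simp add: r_def)
    have "ennreal (min ((norm y)^2) 1 * norm y powr (-(d + s)))
        \<le> ennreal (2 powr ((real k + 1) * (d+s-2))) * indicator (ball 0 (2 powr (1 - real k))) y"
      using le ind by (simp add: ennreal_leI)
    also have "\<dots> \<le> ?B" by (rule ennreal_le_suminf1)
    also have "\<dots> \<le> ?A + ?B" by simp
    finally show ?thesis .
  qed
qed

lemma pow2_aux: "(2::real) powr a * (2 powr b) ^ D = 2 powr (a + real D * b)"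
proof -
  have "((2::real) powr b) ^ D = 2 powr (real D * b)" using powr_power[of "2::real" b D] by simp
  then show ?thesis by (simp add: powr_add)
qed

lemma pow2_aux2: "(2::real) powr (e + real k * q) = 2 powr e * (2 powr q) ^ k"
proof -
  have "((2::real) powr q) ^ k = 2 powr (real k * q)" using powr_power[of "2::real" q k] by simp
  then show ?thesis by (simp add: powr_add)
qed

lemma ball_term_integral:
  assumes "0 \<le> c" "0 \<le> r"
  shows "(\<integral>\<^sup>+ y. ennreal c * indicator (ball (0::'a::euclidean_space) r) y \<partial>lborel)
     = ennreal (unit_ball_vol (real DIM('a)) * (c * r ^ DIM('a)))"
  using assms by (simp add: nn_integral_cmult_indicator emeasure_ball ennreal_mult'[symmetric] mult_ac)

lemma kernel_integrable:
  fixes s :: real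
  assumes s: "0 < s" "s < 1" and D: "DIM('a::euclidean_space) \<ge> 2"
  shows "(\<integral>\<^sup>+ y. ennreal (min ((norm (y::'a))^2) 1 * norm y powr (-(real DIM('a) + s))) \<partial>lborel) < \<infinity>"
proof -
  define d where "d = real DIM('a)"
  define V where "V = unit_ball_vol d"
  have d2: "d \<ge> 2" using D by (simp add: d_def)
  have V: "V \<ge> 0" by (simp add: V_def d_def)
  define A where "A = (\<lambda>k (y::'a). ennreal (2 powr (-(real k * (d+s)))) * indicator (ball 0 (2 powr (real k + 1))) y)"
  define B where "B = (\<lambda>k (y::'a). ennreal (2 powr ((real k + 1) * (d+s-2))) * indicator (ball 0 (2 powr (1 - real k))) y)"
  have mA: "\<And>k. A k \<in> borel_measurable lborel" unfolding A_def by (intro borel_measurable_times_ennreal borel_measurable_const borel_measurable_indicator) auto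
  have mB: "\<And>k. B k \<in> borel_measurable lborel" unfolding B_def by (intro borel_measurable_times_ennreal borel_measurable_const borel_measurable_indicator) auto
  have "(\<integral>\<^sup>+ y. ennreal (min ((norm (y::'a))^2) 1 * norm y powr (-(real DIM('a) + s))) \<partial>lborel)
     \<le> (\<integral>\<^sup>+ y. (\<Sum>k. A k y) + (\<Sum>k. B k y) \<partial>lborel)"
    unfolding A_def B_def d_def[symmetric]
    by (intro nn_integral_mono pointwise_bound s d2)
  also have "\<dots> = (\<integral>\<^sup>+ y. (\<Sum>k. A k y) \<partial>lborel) + (\<integral>\<^sup>+ y. (\<Sum>k. B k y) \<partial>lborel)"
    using mA mB by (intro nn_integral_add) auto
  also have "\<dots> = (\<Sum>k. \<integral>\<^sup>+ y. A k y \<partial>lborel) + (\<Sum>k. \<integral>\<^sup>+ y. B k y \<partial>lborel)"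
    using mA mB by (simp add: nn_integral_suminf)
  also have "\<dots> = (\<Sum>k. ennreal ((V * 2 powr d) * (2 powr (-s)) ^ k))
                  + (\<Sum>k. ennreal ((V * 2 powr (2*d+s-2)) * (2 powr (s-2)) ^ k))"
  proof -
    have a: "(\<integral>\<^sup>+ y. A k y \<partial>lborel) = ennreal ((V * 2 powr d) * (2 powr (-s)) ^ k)" for k
    proof -
      have i: "(\<integral>\<^sup>+ y. A k y \<partial>lborel) = ennreal (V * (2 powr (-(real k * (d+s))) * (2 powr (real k + 1)) ^ DIM('a)))"
        unfolding A_def V_def d_def by (rule ball_term_integral) auto
      have e1: "2 powr (-(real k * (d+s))) * (2 powr (real k + 1)) ^ DIM('a) = 2 powr (d + real k * (-s))"
        unfolding pow2_aux d_def[symmetric] by (rule arg_cong[where f="\<lambda>x. 2 powr x"]) (simp add: d_def algebra_simps)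
      have e2: "2 powr (d + real k * (-s)) = 2 powr d * (2 powr (-s)) ^ k" by (rule pow2_aux2)
      show ?thesis unfolding i e1 e2 by (simp only: mult.assoc)
    qed
    have b: "(\<integral>\<^sup>+ y. B k y \<partial>lborel) = ennreal ((V * 2 powr (2*d+s-2)) * (2 powr (s-2)) ^ k)" for k
    proof -
      have i: "(\<integral>\<^sup>+ y. B k y \<partial>lborel) = ennreal (V * (2 powr ((real k + 1) * (d+s-2)) * (2 powr (1 - real k)) ^ DIM('a)))"
        unfolding B_def V_def d_def by (rule ball_term_integral) auto
      have e1: "2 powr ((real k + 1) * (d+s-2)) * (2 powr (1 - real k)) ^ DIM('a) = 2 powr ((2*d+s-2) + real k * (s-2))"
        unfolding pow2_aux d_def[symmetric] by (rule arg_cong[where f="\<lambda>x. 2 powr x"]) (simp add: d_def algebra_simps)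
      have e2: "2 powr ((2*d+s-2) + real k * (s-2)) = 2 powr (2*d+s-2) * (2 powr (s-2)) ^ k" by (rule pow2_aux2)
      show ?thesis unfolding i e1 e2 by (simp only: mult.assoc)
    qed
    show ?thesis by (simp add: a b)
  qed
  also have "\<dots> < \<infinity>"
  proof -
    have "(\<Sum>k. ennreal ((V * 2 powr d) * (2 powr (-s)) ^ k)) < \<infinity>"
      using V s by (intro geom_sum_fin) (auto simp: powr_less_one)
    moreover have "(\<Sum>k. ennreal ((V * 2 powr (2*d+s-2)) * (2 powr (s-2)) ^ k)) < \<infinity>"
      using V s by (intro geom_sum_fin) (auto simp: powr_less_one)
    ultimately show ?thesis by simp
  qed
  finally show ?thesis .
qed

lemma F_meas: "(\<lambda>y::'a::euclidean_space. ennreal (min ((norm y)^2) 1 * norm y powr (-(d + s)))) \<in> borel_measurable lborel"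
  by measurable

lemma kernel_bounds:
  fixes \<mu> :: "real^'n \<Rightarrow> real"
  assumes "\<And>z. z \<in> sphere 0 1 \<Longrightarrow> lam \<le> \<mu> z \<and> \<mu> z \<le> Lam" "0 < lam"
  shows "0 \<le> kernel \<mu> s y \<and> kernel \<mu> s y \<le> Lam * norm y powr (-(real CARD('n) + s))"
proof (cases "y = 0")
  case True then show ?thesis by (simp add: kernel_def)
next
  case False
  have u: "y /\<^sub>R norm y \<in> sphere 0 1" using False by simp
  have mu0: "lam \<le> \<mu> (y /\<^sub>R norm y) \<and> \<mu> (y /\<^sub>R norm y) \<le> Lam" using assms(1)[OF u] .
  then have mu: "0 \<le> \<mu> (y /\<^sub>R norm y)" "\<mu> (y /\<^sub>R norm y) \<le> Lam" using assms(2) by auto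
  have "kernel \<mu> s y = \<mu> (y /\<^sub>R norm y) * norm y powr (-(real CARD('n) + s))"
    by (simp only: kernel_def powr_minus divide_inverse)
  then show ?thesis using mu by (simp add: mult_right_mono)
qed
lemma C2_quad:
  fixes p q :: "real^'n" and K0 e :: real
  shows "C2_on (\<lambda>x. K0 - e * ((x-p)\<bullet>(x-p)) - e * ((x-q)\<bullet>(x-q))) S"
proof -
  define c where "c = - 2 * e"
  define f' where "f' = (\<lambda>x::real^'n. blinfun_inner_left (c *\<^sub>R (2 *\<^sub>R x - p - q)))"
  define F2 where "F2 = Blinfun (\<lambda>h::real^'n. blinfun_inner_left ((2*c) *\<^sub>R h))"
  have bl: "bounded_linear (\<lambda>h::real^'n. blinfun_inner_left ((2*c) *\<^sub>R h))"
    by (intro bounded_linear_compose[OF bounded_linear_blinfun_inner_left] bounded_linear_scaleR_right bounded_linear_ident)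
  have F2: "blinfun_apply F2 = (\<lambda>h. blinfun_inner_left ((2*c) *\<^sub>R h))"
    unfolding F2_def using bl by (rule bounded_linear_Blinfun_apply)
  have d1: "((\<lambda>x. K0 - e * ((x-p)\<bullet>(x-p)) - e * ((x-q)\<bullet>(x-q))) has_derivative blinfun_apply (f' x)) (at x)" for x
    unfolding f'_def c_def
    by (auto intro!: derivative_eq_intros simp: inner_commute algebra_simps inner_diff_right inner_add_right)
  have d2: "(f' has_derivative blinfun_apply (F2)) (at x)" for x
  proof -
    have "((\<lambda>x. c *\<^sub>R (2 *\<^sub>R x - p - q)) has_derivative (\<lambda>h. (2*c) *\<^sub>R h)) (at x)"
      by (auto intro!: derivative_eq_intros simp: algebra_simps)
    from bounded_linear.has_derivative[OF bounded_linear_blinfun_inner_left this]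
    show ?thesis unfolding f'_def F2 .
  qed
  show ?thesis unfolding C2_on_def
    by (rule exI[of _ f'], rule exI[of _ "\<lambda>_. F2"]) (use d1 d2 in auto)
qed

theorem lemma7p3:
  fixes \<mu> :: "real^'n \<Rightarrow> real" and w :: "real^'n \<Rightarrow> real"
    and s lam Lam c :: real
  assumes n2: "CARD('n) \<ge> 2"
    and s: "0 < s" "s < 1"
    and mu_meas: "\<mu> \<in> borel_measurable (restrict_space borel (sphere 0 1))"
    and mu_even: "\<And>z. z \<in> sphere 0 1 \<Longrightarrow> \<mu> z = \<mu> (- z)"
    and mu_bounds: "0 < lam" "lam \<le> Lam" "\<And>z. z \<in> sphere 0 1 \<Longrightarrow> lam \<le> \<mu> z \<and> \<mu> z \<le> Lam"
    and w_cont: "continuous_on UNIV w"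
    and w_bdd: "bdd_below (range w)"
    and c: "c > 0"
    and visc: "visc_super \<mu> s w (\<lambda>x. - c * w x) {x. w x < 0}"
  shows "\<forall>x. w x \<ge> 0"
proof (rule ccontr)
  assume "\<not> (\<forall>x. w x \<ge> 0)"
  then obtain z where z: "w z < 0" by (auto simp: not_le)
  define m where "m = Inf (range w)"
  have mle: "\<And>x. m \<le> w x" unfolding m_def using w_bdd by (simp add: cInf_lower)
  have m0: "m < 0" using mle[of z] z by simp
  have Lam0: "Lam > 0" using mu_bounds by simp
  define F where "F = (\<lambda>y::real^'n. min ((norm y)^2) 1 * norm y powr (-(real CARD('n) + s)))"
  have Fnn: "\<And>y. F y \<ge> 0" unfolding F_def by simp
  have Ifin: "(\<integral>\<^sup>+ y. ennreal (F y) \<partial>lborel) < \<infinity>"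
    using kernel_integrable[where 'a="real^'n", OF s] n2 unfolding F_def by simp
  then obtain Ir where Ir: "(\<integral>\<^sup>+ y. ennreal (F y) \<partial>lborel) = ennreal Ir" "Ir \<ge> 0"
    by (cases "(\<integral>\<^sup>+ y. ennreal (F y) \<partial>lborel)") auto
  define \<delta> where "\<delta> = min (-m/2) (-c*m / (4*(Lam*Ir+1)))"
  have LI: "Lam*Ir \<ge> 0" using Lam0 Ir by simp
  have cm: "-c*m > 0" using c m0 by (simp add: mult_pos_neg)
  have q0: "-c*m / (4*(Lam*Ir+1)) > 0" using cm LI by (intro divide_pos_pos) auto
  have \<delta>0: "\<delta> > 0" unfolding \<delta>_def using m0 q0 by (simp only: min_less_iff_conj) simp
  have \<delta>1: "\<delta> \<le> -m/2" unfolding \<delta>_def by simp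
  have \<delta>2: "\<delta> \<le> -c*m / (4*(Lam*Ir+1))" unfolding \<delta>_def by simp
  have "m < m + \<delta>" using \<delta>0 by simp
  then have "\<exists>x\<in>range w. x < m + \<delta>"
    using cInf_less_iff[of "range w" "m+\<delta>"] w_bdd unfolding m_def by auto
  then obtain x1 where x1: "w x1 < m + \<delta>" by auto
  define \<epsilon> where "\<epsilon> = \<delta>"
  define h where "h = (\<lambda>x. w x + \<epsilon> * ((x-x1)\<bullet>(x-x1)))"
  have hcont: "continuous_on UNIV h" unfolding h_def
    by (intro continuous_intros w_cont)
  obtain x0 where x0: "\<And>x. h x0 \<le> h x"
  proof -
    define R where "R = sqrt ((w x1 - m)/\<epsilon>)"
    have R0: "R \<ge> 0" unfolding R_def using mle[of x1] \<delta>0 \<epsilon>_def by simp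
    have "\<exists>x\<in>cball x1 R. \<forall>y\<in>cball x1 R. h x \<le> h y"
      using R0 by (intro continuous_attains_inf compact_cball continuous_on_subset[OF hcont]) auto
    then obtain x where xin: "x \<in> cball x1 R" and xm: "\<And>y. y \<in> cball x1 R \<Longrightarrow> h x \<le> h y" by blast
    have "h x \<le> h y" for y
    proof (cases "y \<in> cball x1 R")
      case True then show ?thesis using xm by simp
    next
      case False
      then have "R < norm (y - x1)" by (simp add: dist_norm norm_minus_commute)
      then have "R^2 < (norm (y - x1))^2" using R0 by (intro power_strict_mono) auto
      also have "(norm (y - x1))^2 = (y-x1)\<bullet>(y-x1)" by (simp add: power2_norm_eq_inner)
      finally have "R^2 < (y-x1)\<bullet>(y-x1)" .
      moreover have "R^2 = (w x1 - m)/\<epsilon>" unfolding R_def using mle[of x1] \<delta>0 \<epsilon>_def by simp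
      ultimately have "w x1 - m < \<epsilon> * ((y-x1)\<bullet>(y-x1))" using \<delta>0 \<epsilon>_def by (simp add: field_simps)
      then have "h x1 \<le> h y" unfolding h_def using mle[of y] by simp
      moreover have "h x \<le> h x1" using xm[of x1] R0 by simp
      ultimately show ?thesis by simp
    qed
    then show ?thesis by (rule that)
  qed
  have wx0: "w x0 < m + \<delta>"
  proof -
    have "w x0 \<le> h x0" unfolding h_def using \<delta>0 \<epsilon>_def by simp
    also have "\<dots> \<le> h x1" by (rule x0)
    also have "h x1 = w x1" unfolding h_def by simp
    finally show ?thesis using x1 by simp
  qed
  have wx0': "w x0 < m/2" using wx0 \<delta>1 by simp
  define \<phi> where "\<phi> = (\<lambda>x. (w x0 + \<epsilon> * ((x0-x1)\<bullet>(x0-x1))) - \<epsilon> * ((x-x1)\<bullet>(x-x1)) - \<epsilon> * ((x-x0)\<bullet>(x-x0)))"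
  have \<phi>x0: "\<phi> x0 = w x0" unfolding \<phi>_def by simp
  have wge: "\<phi> x + \<epsilon> * ((x-x0)\<bullet>(x-x0)) \<le> w x" for x
    using x0[of x] unfolding h_def \<phi>_def by simp
  have \<phi>cont: "continuous_on UNIV \<phi>" unfolding \<phi>_def by (intro continuous_intros)
  define N where "N = {x. w x < 0} \<inter> {x. m - \<delta> < \<phi> x}"
  have Nopen: "open N" unfolding N_def
    by (intro open_Int open_Collect_less w_cont \<phi>cont continuous_on_const)
  have x0N: "x0 \<in> N" unfolding N_def using wx0' m0 \<phi>x0 mle[of x0] \<delta>0 by simp
  have NO: "N \<subseteq> {x. w x < 0}" unfolding N_def by auto
  have C2: "C2_on \<phi> N" unfolding \<phi>_def by (rule C2_quad)
  have strict: "\<forall>x\<in>N - {x0}. \<phi> x < w x"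
  proof
    fix x assume "x \<in> N - {x0}"
    then have "x - x0 \<noteq> 0" by simp
    then have "(x-x0)\<bullet>(x-x0) > 0" by simp
    then have "\<epsilon> * ((x-x0)\<bullet>(x-x0)) > 0" using \<delta>0 \<epsilon>_def by simp
    then show "\<phi> x < w x" using wge[of x] by simp
  qed
  define v where "v = (\<lambda>x. if x \<in> N then \<phi> x else w x)"
  have "Lop \<mu> s v x0 \<ge> ereal (- c * w x0)"
    using visc x0N Nopen NO C2 \<phi>x0 strict wx0' m0 unfolding visc_super_def v_def by auto
  have vphi: "\<phi> x \<le> v x" for x
    unfolding v_def using wge[of x] \<delta>0 \<epsilon>_def
    by (auto intro: order_trans[of _ "\<phi> x + \<epsilon> * ((x-x0)\<bullet>(x-x0))"])
  have vm: "m - \<delta> \<le> v x" for x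
    unfolding v_def N_def using mle[of x] \<delta>0 by auto
  have vx0: "v x0 = w x0" unfolding v_def using x0N \<phi>x0 by simp
  define g where "g = (\<lambda>y. (2 * v x0 - v (x0 + y) - v (x0 - y)) / 2 * kernel \<mu> s y)"
  have gle: "g y \<le> 2*\<delta>*Lam * F y" for y
  proof -
    have sd: "\<phi> (x0+y) + \<phi> (x0-y) - 2 * \<phi> x0 = - 4 * \<epsilon> * (y \<bullet> y)"
      unfolding \<phi>_def by (simp add: inner_add_left inner_add_right inner_diff_left inner_diff_right inner_commute algebra_simps)
    have D1: "2 * v x0 - v (x0 + y) - v (x0 - y) \<le> 4 * \<delta> * (y \<bullet> y)"
      using sd vphi[of "x0+y"] vphi[of "x0-y"] vx0 \<phi>x0 \<epsilon>_def by simp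
    have D2: "2 * v x0 - v (x0 + y) - v (x0 - y) \<le> 4 * \<delta>"
      using vm[of "x0+y"] vm[of "x0-y"] vx0 wx0 by simp
    have yy: "y \<bullet> y = (norm y)^2" by (simp add: power2_norm_eq_inner)
    have D: "(2 * v x0 - v (x0 + y) - v (x0 - y)) / 2 \<le> 2*\<delta> * min ((norm y)^2) 1"
      using D1 D2 unfolding yy by (auto simp: min_def)
    have K: "0 \<le> kernel \<mu> s y" "kernel \<mu> s y \<le> Lam * norm y powr (-(real CARD('n) + s))"
      using kernel_bounds[where \<mu>=\<mu> and s=s and y=y and lam=lam and Lam=Lam] mu_bounds by auto
    have "g y \<le> (2*\<delta> * min ((norm y)^2) 1) * kernel \<mu> s y"
      unfolding g_def using D K by (intro mult_right_mono) auto
    also have "\<dots> \<le> (2*\<delta> * min ((norm y)^2) 1) * (Lam * norm y powr (-(real CARD('n) + s)))"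
      using K \<delta>0 by (intro mult_left_mono) auto
    also have "\<dots> = 2*\<delta>*Lam * F y" unfolding F_def by (simp add: mult_ac)
    finally show ?thesis .
  qed
  have "(\<integral>\<^sup>+ y. ennreal (g y) \<partial>lborel) \<le> (\<integral>\<^sup>+ y. ennreal (2*\<delta>*Lam) * ennreal (F y) \<partial>lborel)"
    using gle \<delta>0 Lam0 Fnn by (intro nn_integral_mono) (simp add: ennreal_mult'[symmetric] ennreal_leI)
  also have "\<dots> = ennreal (2*\<delta>*Lam) * ennreal Ir"
    using F_meas[of "real CARD('n)" s] unfolding F_def Ir(1)[unfolded F_def, symmetric]
    by (subst nn_integral_cmult) auto
  also have "\<dots> = ennreal (2*\<delta>*Lam*Ir)" using \<delta>0 Lam0 by (simp add: ennreal_mult')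
  finally have gI: "(\<integral>\<^sup>+ y. ennreal (g y) \<partial>lborel) \<le> ennreal (2*\<delta>*Lam*Ir)" .
  have "Lop \<mu> s v x0 \<le> enn2ereal (\<integral>\<^sup>+ y. ennreal (g y) \<partial>lborel)"
    unfolding Lop_def Let_def g_def by (rule ereal_diff_le_self) (simp add: enn2ereal_nonneg)
  also have "\<dots> \<le> enn2ereal (ennreal (2*\<delta>*Lam*Ir))" using gI by (simp add: less_eq_ennreal.rep_eq)
  also have "\<dots> = ereal (2*\<delta>*Lam*Ir)" using \<delta>0 Lam0 Ir by simp
  also have "\<dots> < ereal (- c * w x0)"
  proof -
    have "2*\<delta>*(Lam*Ir) \<le> 2*(-c*m / (4*(Lam*Ir+1)))*(Lam*Ir)"
      using \<delta>2 LI by (intro mult_right_mono) auto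
    also have "\<dots> = (-c*m/2) * ((Lam*Ir)/(Lam*Ir+1))" using LI by (simp add: field_simps)
    also have "\<dots> \<le> (-c*m/2) * 1"
      using LI cm by (intro mult_left_mono) auto
    also have "\<dots> < - c * w x0" using wx0' c by (simp add: field_simps)
    finally show ?thesis by (simp add: mult_ac)
  qed
  finally show False using \<open>Lop \<mu> s v x0 \<ge> ereal (- c * w x0)\<close> by simp
qed

end
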